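(* Let $q,k\geq 0$ and let $\vec{x}=(x_0,\ldots,x_k)$ be a vector of nonnegative integers. Paul has a winning strategy for the $q$-round pathological liar game with $k$ lies and initial state $\vec{x}$ if and only if there exists an $\vec{x}$-covering of $Q_q$. Similarly, Paul has a winning strategy for the $q$-round original liar game with $k$ lies and initial state $\vec{x}$ if and only if there exists an $\vec{x}$-packing of $Q_q$.
   Context: Liar games: a state is $\vec{x}=(x_0,\ldots,x_k)$ of nonnegative integers ($x_i$ = number of elements carrying $i$ lies). In each of $q$ rounds Paul chooses a legal question $\vec{a}=(a_0,\ldots,a_k)$ with integers $0\leq a_i\leq x_i$, and Carole answers Y or N; the new state is $Y(\vec{x},\vec{a})=(a_0,\,a_1+x_0-a_0,\,\ldots,\,a_k+x_{k-1}-a_{k-1})$ or $N(\vec{x},\vec{a})=(x_0-a_0,\,x_1-a_1+a_0,\,\ldots,\,x_k-a_k+a_{k-1})$ respectively. In the pathological game Paul wins iff after $q$ rounds $\sum_i x_i\geq 1$; in the original game Paul wins iff after $q$ rounds $\sum_i x_i\leq 1$. Hypercube: $Q_q=\{Y,N\}^q$, with complementation $\overline{Y}=N$, $\overline{N}=Y$. For $i\geq 0$ let $\binom{[q]}{\leq i}$ be the family of subsets of $[q]=\{1,\ldots,q\}$ of size at most $i$. An $i$-quasiball in $Q_q$ is the image $f(\binom{[q]}{\leq i})$ of an injective map $f:\binom{[q]}{\leq i}\to Q_q$ with the property: whenever $A=\{p_1,\ldots,p_{|A|}\}$ and $B=\{p_1,\ldots,p_{|A|},p_{|A|+1},\ldots,p_{|B|}\}$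 lie in $\binom{[q]}{\leq i}$ with $p_1<\cdots<p_{|A|}<p_{|A|+1}<\cdots<p_{|B|}$ and $|B|>|A|$, and $f(A)=\omega_1\cdots\omega_q$, then $f(B)=\omega_1\cdots\omega_{p_{|A|+1}-1}\,\overline{\omega}_{p_{|A|+1}}\,\omega'_{p_{|A|+1}+1}\cdots\omega'_q$ for some arbitrary $\omega'_{p_{|A|+1}+1}\cdots\omega'_q\in\{Y,N\}^{q-p_{|A|+1}}$ (i.e. $f(B)$ agrees with $f(A)$ before position $p_{|A|+1}$ and differs from it at that position). An $\vec{x}$-covering of $Q_q$ is a collection consisting of $x_i$ $(k-i)$-quasiballs for each $0\leq i\leq k$ whose union is $Q_q$; an $\vec{x}$-packing of $Q_q$ is such a collection whose members are pairwise disjoint (the union need not be $Q_q$). *)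

theory Defs
  imports Main
begin

(* States and questions: lists of length k+1, entry i = number of elements with i lies. *)

definition legal_question :: "nat list \<Rightarrow> nat list \<Rightarrow> bool" where
  "legal_question x a \<longleftrightarrow> length a = length x \<and> (\<forall>i<length x. a ! i \<le> x ! i)"

definition yes_state :: "nat list \<Rightarrow> nat list \<Rightarrow> nat list" where
  "yes_state x a = map (\<lambda>i. if i = 0 then a ! 0 else a ! i + (x ! (i - 1) - a ! (i - 1))) [0..<length x]"

definition no_state :: "nat list \<Rightarrow> nat list \<Rightarrow> nat list" where
  "no_state x a = map (\<lambda>i. if i = 0 then x ! 0 - a ! 0 else (x ! i - a ! i) + a ! (i - 1)) [0..<length x]"

fun paul_wins :: "(nat list \<Rightarrow> bool) \<Rightarrow> nat \<Rightarrow> nat list \<Rightarrow> bool" where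
  "paul_wins P 0 x = P x"
| "paul_wins P (Suc q) x =
     (\<exists>a. legal_question x a \<and> paul_wins P q (yes_state x a) \<and> paul_wins P q (no_state x a))"

definition pathological_win :: "nat \<Rightarrow> nat list \<Rightarrow> bool" where
  "pathological_win q x = paul_wins (\<lambda>y. sum_list y \<ge> 1) q x"

definition original_win :: "nat \<Rightarrow> nat list \<Rightarrow> bool" where
  "original_win q x = paul_wins (\<lambda>y. sum_list y \<le> 1) q x"

(* Hypercube Q_q: words over {Y,N} of length q, Y = True, N = False;
   position j (1 \<le> j \<le> q) of word w is w ! (j - 1). *)
definition hypercube :: "nat \<Rightarrow> bool list set" where
  "hypercube q = {w. length w = q}"

definition small_subsets :: "nat \<Rightarrow> nat \<Rightarrow> nat set set" where
  "small_subsets q i = {A. A \<subseteq> {1..q} \<and> card A \<le> i}"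

definition quasiball_map :: "nat \<Rightarrow> nat \<Rightarrow> (nat set \<Rightarrow> bool list) \<Rightarrow> bool" where
  "quasiball_map q i f \<longleftrightarrow>
     inj_on f (small_subsets q i) \<and> f ` small_subsets q i \<subseteq> hypercube q \<and>
     (\<forall>A\<in>small_subsets q i. \<forall>B\<in>small_subsets q i.
        (A \<subseteq> B \<and> card A < card B \<and> (\<forall>a\<in>A. \<forall>b\<in>B - A. a < b)) \<longrightarrow>
          (let p = Min (B - A) in
             (\<forall>j. 1 \<le> j \<and> j < p \<longrightarrow> f B ! (j - 1) = f A ! (j - 1)) \<and>
             f B ! (p - 1) \<noteq> f A ! (p - 1)))"

definition quasiball :: "nat \<Rightarrow> nat \<Rightarrow> bool list set \<Rightarrow> bool" where
  "quasiball q i S \<longleftrightarrow> (\<exists>f. quasiball_map q i f \<and> S = f ` small_subsets q i)"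

definition x_covering :: "nat \<Rightarrow> nat list \<Rightarrow> (nat \<Rightarrow> nat \<Rightarrow> bool list set) \<Rightarrow> bool" where
  "x_covering q x B \<longleftrightarrow>
     (\<forall>i<length x. \<forall>j<x ! i. quasiball q (length x - 1 - i) (B i j)) \<and>
     (\<Union>i<length x. \<Union>j<x ! i. B i j) = hypercube q"

definition x_packing :: "nat \<Rightarrow> nat list \<Rightarrow> (nat \<Rightarrow> nat \<Rightarrow> bool list set) \<Rightarrow> bool" where
  "x_packing q x B \<longleftrightarrow>
     (\<forall>i<length x. \<forall>j<x ! i. quasiball q (length x - 1 - i) (B i j)) \<and>
     (\<forall>i<length x. \<forall>j<x ! i. \<forall>i'<length x. \<forall>j'<x ! i'.
        (i, j) \<noteq> (i', j') \<longrightarrow> B i j \<inter> B i' j' = {})"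

end

theory Submission
  imports Defs
begin

lemma ss_mem: "A \<in> small_subsets q i \<longleftrightarrow> A \<subseteq> {1..q} \<and> card A \<le> i"
  by (simp add: small_subsets_def)

lemma ss_fin: "A \<in> small_subsets q i \<Longrightarrow> finite A"
  by (auto simp: ss_mem intro: finite_subset)

lemma qm_alt: "quasiball_map q i f \<longleftrightarrow> inj_on f (small_subsets q i) \<and> f ` small_subsets q i \<subseteq> hypercube q \<and>
   (\<forall>B\<in>small_subsets q i. \<forall>p\<in>B. (\<forall>j<p-1. f B ! j = f (B \<inter> {..<p}) ! j) \<and> f B ! (p-1) \<noteq> f (B \<inter> {..<p}) ! (p-1))"
  (is "?L \<longleftrightarrow> ?I \<and> ?H \<and> ?C")
proof
  assume L: ?L
  have C: ?C
  proof (intro ballI)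
    fix B p assume B: "B \<in> small_subsets q i" and p: "p \<in> B"
    define A where "A = B \<inter> {..<p}"
    have fB: "finite B" using B ss_fin by blast
    have AB: "A \<subseteq> B" unfolding A_def by blast
    have As: "A \<in> small_subsets q i" using B AB fB card_mono[OF fB AB] by (auto simp: ss_mem)
    have "A \<subset> B" using AB p by (auto simp: A_def)
    then have cAB: "card A < card B" using fB psubset_card_mono by blast
    have ord: "\<forall>a\<in>A. \<forall>b\<in>B - A. a < b" by (auto simp: A_def)
    have mn: "Min (B - A) = p"
      by (rule Min_eqI) (use fB p in \<open>auto simp: A_def\<close>)
    have "(\<forall>j. 1 \<le> j \<and> j < p \<longrightarrow> f B ! (j - 1) = f A ! (j - 1)) \<and> f B ! (p - 1) \<noteq> f A ! (p - 1)" (is ?X)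
      using L B As AB cAB ord mn unfolding quasiball_map_def Let_def by blast
    note * = this
    show "(\<forall>j<p-1. f B ! j = f (B \<inter> {..<p}) ! j) \<and> f B ! (p-1) \<noteq> f (B \<inter> {..<p}) ! (p-1)"
      unfolding A_def[symmetric]
    proof (intro conjI allI impI)
      fix j assume "j < p - 1"
      then show "f B ! j = f A ! j" using * [THEN conjunct1, rule_format, of "Suc j"] by simp
    qed (use * in simp)
  qed
  show "?I \<and> ?H \<and> ?C" using L C unfolding quasiball_map_def by blast
next
  assume R: "?I \<and> ?H \<and> ?C"
  have "\<forall>A\<in>small_subsets q i. \<forall>B\<in>small_subsets q i.
        (A \<subseteq> B \<and> card A < card B \<and> (\<forall>a\<in>A. \<forall>b\<in>B - A. a < b)) \<longrightarrow>
          (let p = Min (B - A) in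
             (\<forall>j. 1 \<le> j \<and> j < p \<longrightarrow> f B ! (j - 1) = f A ! (j - 1)) \<and>
             f B ! (p - 1) \<noteq> f A ! (p - 1))"
  proof (intro ballI impI)
    fix A B assume As: "A \<in> small_subsets q i" and B: "B \<in> small_subsets q i"
      and h: "A \<subseteq> B \<and> card A < card B \<and> (\<forall>a\<in>A. \<forall>b\<in>B - A. a < b)"
    have fB: "finite B" using B ss_fin by blast
    have ne: "B - A \<noteq> {}" proof
      assume "B - A = {}"
      then have "B \<subseteq> A" by blast
      then have "card B \<le> card A" using card_mono[OF ss_fin[OF As]] by blast
      then show False using h by simp
    qed
    define p where "p = Min (B - A)"
    have pin: "p \<in> B - A" unfolding p_def using fB ne Min_in[of "B - A"] by blast
    have Aeq: "B \<inter> {..<p} = A"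
    proof
      show "B \<inter> {..<p} \<subseteq> A"
      proof
        fix y assume y: "y \<in> B \<inter> {..<p}"
        show "y \<in> A"
        proof (rule ccontr)
          assume "y \<notin> A"
          then have "p \<le> y" unfolding p_def using y fB by (auto intro: Min_le)
          then show False using y by auto
        qed
      qed
      show "A \<subseteq> B \<inter> {..<p}" using h pin by auto
    qed
    have "(\<forall>j<p-1. f B ! j = f A ! j) \<and> f B ! (p-1) \<noteq> f A ! (p-1)"
      using R B pin Aeq by blast
    then show "let p = Min (B - A) in
             (\<forall>j. 1 \<le> j \<and> j < p \<longrightarrow> f B ! (j - 1) = f A ! (j - 1)) \<and>
             f B ! (p - 1) \<noteq> f A ! (p - 1)"
      unfolding p_def[symmetric] Let_def by auto
  qed
  then show ?L using R unfolding quasiball_map_def by blast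
qed

lemma hc_mem: "w \<in> hypercube q \<longleftrightarrow> length w = q" by (simp add: hypercube_def)

lemma quasiball_sub: "quasiball q r S \<Longrightarrow> S \<subseteq> hypercube q"
  unfolding quasiball_def quasiball_map_def by blast

lemma ss0: "small_subsets 0 r = {{}}"
  by (auto simp: small_subsets_def)

lemma Q0: "quasiball 0 r S \<longleftrightarrow> S = {[]}"
proof
  assume "quasiball 0 r S"
  then obtain f where f: "quasiball_map 0 r f" "S = f ` small_subsets 0 r" unfolding quasiball_def by blast
  then have "f {} \<in> hypercube 0" unfolding quasiball_map_def ss0 by blast
  then show "S = {[]}" using f by (simp add: ss0 hc_mem)
next
  assume S: "S = {[]}"
  have "quasiball_map 0 r (\<lambda>_. [])" unfolding qm_alt ss0 by (simp add: hc_mem)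
  then show "quasiball 0 r S" unfolding quasiball_def S ss0 by blast
qed

definition D :: "nat set \<Rightarrow> nat set" where "D A = {x. 1 \<le> x \<and> Suc x \<in> A}"

lemma D_sub: "A \<subseteq> {1..Suc q} \<Longrightarrow> D A \<subseteq> {1..q}" by (auto simp: D_def)

lemma D_recon: "A \<subseteq> {1..Suc q} \<Longrightarrow> A = Suc ` D A \<union> (if 1 \<in> A then {1} else {})"
proof -
  assume A: "A \<subseteq> {1..Suc q}"
  have "x \<in> Suc ` D A" if "x \<in> A" "x \<noteq> 1" for x
  proof -
    have "x \<ge> 2" using that A by force
    then have "x = Suc (x - 1)" "1 \<le> x - 1" by auto
    then have "x - 1 \<in> D A" using that unfolding D_def by simp
    then show ?thesis using \<open>x = Suc (x - 1)\<close> by (metis image_eqI)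
  qed
  then show ?thesis by (auto simp: D_def)
qed

lemma D_Suc: "A \<subseteq> {1..q} \<Longrightarrow> D (Suc ` A) = A" by (auto simp: D_def)
lemma D_ins: "A \<subseteq> {1..q} \<Longrightarrow> D (insert 1 (Suc ` A)) = A" by (auto simp: D_def)
lemma one_notin_SucD: "1 \<notin> Suc ` D A" by (auto simp: D_def)
lemma one_notin: "A \<subseteq> {1..q} \<Longrightarrow> 1 \<notin> Suc ` A" by auto

lemma D_card1: "A \<subseteq> {1..Suc q} \<Longrightarrow> 1 \<notin> A \<Longrightarrow> card (D A) = card A"
proof -
  assume A: "A \<subseteq> {1..Suc q}" and o: "1 \<notin> A"
  have "card (Suc ` D A) = card (D A)" by (simp add: card_image)
  moreover have "A = Suc ` D A" using D_recon[OF A] o by simp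
  ultimately show ?thesis by simp
qed
lemma D_card2: "A \<subseteq> {1..Suc q} \<Longrightarrow> 1 \<in> A \<Longrightarrow> card A = Suc (card (D A))"
proof -
  assume A: "A \<subseteq> {1..Suc q}" and o: "1 \<in> A"
  have fin: "finite (D A)" using D_sub[OF A] by (rule finite_subset) simp
  have "A = insert 1 (Suc ` D A)" using D_recon[OF A] o by simp
  moreover have "card (insert 1 (Suc ` D A)) = Suc (card (D A))"
    using one_notin_SucD[of A] fin by (simp add: card_image)
  ultimately show ?thesis by simp
qed

lemma D_cut: "D (B \<inter> {..<p}) = D B \<inter> {..<p - 1}" by (auto simp: D_def)

lemma ss_Suc: "A \<in> small_subsets q r \<Longrightarrow> Suc ` A \<in> small_subsets (Suc q) r"
  by (auto simp: ss_mem card_image)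
lemma ss_ins: "A \<in> small_subsets q (r - 1) \<Longrightarrow> r \<noteq> 0 \<Longrightarrow> insert 1 (Suc ` A) \<in> small_subsets (Suc q) r"
proof -
  assume A: "A \<in> small_subsets q (r - 1)" and r: "r \<noteq> 0"
  have "finite A" using ss_fin[OF A] .
  moreover have "1 \<notin> Suc ` A" using A by (auto simp: ss_mem)
  ultimately show ?thesis using A r by (auto simp: ss_mem card_image)
qed
lemma ss_D1: "A \<in> small_subsets (Suc q) r \<Longrightarrow> 1 \<notin> A \<Longrightarrow> D A \<in> small_subsets q r"
  using D_sub D_card1 by (metis ss_mem)
lemma ss_D2: "A \<in> small_subsets (Suc q) r \<Longrightarrow> 1 \<in> A \<Longrightarrow> r \<noteq> 0 \<and> D A \<in> small_subsets q (r - 1)"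
proof -
  assume A: "A \<in> small_subsets (Suc q) r" and o: "1 \<in> A"
  have As: "A \<subseteq> {1..Suc q}" "card A \<le> r" using A by (auto simp: ss_mem)
  show ?thesis using D_sub[OF As(1)] D_card2[OF As(1) o] As(2) by (simp add: ss_mem)
qed

lemma nth_Cons_pos: "p \<ge> 1 \<Longrightarrow> (a # l) ! p = l ! (p - 1)" by (cases p) auto

lemma QS_fwd:
  assumes "quasiball (Suc q) r S"
  shows "\<exists>b S1 S2. quasiball q r S1 \<and> (if r = 0 then S2 = {} else quasiball q (r - 1) S2)
           \<and> S = Cons b ` S1 \<union> Cons (\<not> b) ` S2"
proof -
  obtain f where qm: "quasiball_map (Suc q) r f" and S: "S = f ` small_subsets (Suc q) r"
    using assms unfolding quasiball_def by blast
  note Q = qm[unfolded qm_alt]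
  have inj: "inj_on f (small_subsets (Suc q) r)" using Q by blast
  have len: "length (f A) = Suc q" if "A \<in> small_subsets (Suc q) r" for A
    using Q that by (auto simp: hc_mem)
  have cond: "(\<forall>j<p-1. f B ! j = f (B \<inter> {..<p}) ! j) \<and> f B ! (p-1) \<noteq> f (B \<inter> {..<p}) ! (p-1)"
    if "B \<in> small_subsets (Suc q) r" "p \<in> B" for B p using Q that by blast
  have e: "{} \<in> small_subsets (Suc q) r" by (simp add: ss_mem)
  define b where "b = f {} ! 0"
  have hd: "f A ! 0 = (if 1 \<in> A then \<not> b else b)" if A: "A \<in> small_subsets (Suc q) r" for A
  proof (cases "1 \<in> A")
    case True
    have "A \<inter> {..<1} = {}" using A by (auto simp: ss_mem)
    then show ?thesis using cond[OF A True] True unfolding b_def by auto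
  next
    case False
    show ?thesis
    proof (cases "A = {}")
      case True then show ?thesis using False by (simp add: b_def)
    next
      case ne: False
      have fA: "finite A" using ss_fin[OF A] .
      define p where "p = Min A"
      have pA: "p \<in> A" unfolding p_def using fA ne by (rule Min_in)
      have "A \<inter> {..<p} = {}" unfolding p_def using fA by (auto dest: Min_le)
      moreover have "p \<ge> 2"
      proof -
        have "p \<ge> 1" "p \<noteq> 1" using pA False A by (auto simp: ss_mem)
        then show ?thesis by linarith
      qed
      ultimately show ?thesis using cond[OF A pA] False unfolding b_def by auto
    qed
  qed
  have dec: "f A = (if 1 \<in> A then \<not> b else b) # tl (f A)" if A: "A \<in> small_subsets (Suc q) r" for A
  proof -
    have "f A \<noteq> []" using len[OF A] by auto
    then have "f A = f A ! 0 # tl (f A)" by (cases "f A") auto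
    then show ?thesis using hd[OF A] by simp
  qed
  define g1 where "g1 A = tl (f (Suc ` A))" for A
  define g2 where "g2 A = tl (f (insert 1 (Suc ` A)))" for A
  have g1d: "f (Suc ` A) = b # g1 A" if "A \<in> small_subsets q r" for A
  proof -
    have "1 \<notin> Suc ` A" using that by (auto simp: ss_mem)
    then show ?thesis using dec[OF ss_Suc[OF that]] unfolding g1_def by simp
  qed
  have g2d: "f (insert 1 (Suc ` A)) = (\<not> b) # g2 A" if "A \<in> small_subsets q (r - 1)" "r \<noteq> 0" for A
    using dec[OF ss_ins[OF that]] unfolding g2_def by simp
  have sucsub: "A \<subseteq> {1..q}" if "A \<in> small_subsets q r'" for A r' using that by (simp add: ss_mem)
  have qm1: "quasiball_map q r g1"
    unfolding qm_alt
  proof (intro conjI)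
    show "inj_on g1 (small_subsets q r)"
    proof (rule inj_onI)
      fix A A' assume A: "A \<in> small_subsets q r" and A': "A' \<in> small_subsets q r" and eq: "g1 A = g1 A'"
      have "f (Suc ` A) = f (Suc ` A')" using g1d[OF A] g1d[OF A'] eq by simp
      then have "Suc ` A = Suc ` A'" using inj ss_Suc[OF A] ss_Suc[OF A'] by (meson inj_onD)
      then show "A = A'" by (simp add: inj_image_eq_iff)
    qed
    show "g1 ` small_subsets q r \<subseteq> hypercube q"
      using len ss_Suc unfolding g1_def by (auto simp: hc_mem)
    show "\<forall>B\<in>small_subsets q r. \<forall>p\<in>B. (\<forall>j<p - 1. g1 B ! j = g1 (B \<inter> {..<p}) ! j) \<and> g1 B ! (p - 1) \<noteq> g1 (B \<inter> {..<p}) ! (p - 1)"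
    proof (intro ballI)
      fix B p assume B: "B \<in> small_subsets q r" and p: "p \<in> B"
      have p1: "p \<ge> 1" using B p by (auto simp: ss_mem)
      have BA: "B \<inter> {..<p} \<in> small_subsets q r" using B card_mono[OF ss_fin[OF B], of "B \<inter> {..<p}"] by (auto simp: ss_mem)
      have cut: "Suc ` B \<inter> {..<Suc p} = Suc ` (B \<inter> {..<p})" by auto
      have c: "(\<forall>j<Suc p - 1. f (Suc ` B) ! j = f (Suc ` (B \<inter> {..<p})) ! j) \<and> f (Suc ` B) ! (Suc p - 1) \<noteq> f (Suc ` (B \<inter> {..<p})) ! (Suc p - 1)"
        using cond[OF ss_Suc[OF B], of "Suc p"] p cut by auto
      show "(\<forall>j<p - 1. g1 B ! j = g1 (B \<inter> {..<p}) ! j) \<and> g1 B ! (p - 1) \<noteq> g1 (B \<inter> {..<p}) ! (p - 1)"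
      proof (intro conjI allI impI)
        fix j assume "j < p - 1"
        then show "g1 B ! j = g1 (B \<inter> {..<p}) ! j" using c[THEN conjunct1, rule_format, of "Suc j"]
          g1d[OF B] g1d[OF BA] by simp
      next
        show "g1 B ! (p - 1) \<noteq> g1 (B \<inter> {..<p}) ! (p - 1)" using c[THEN conjunct2] p1
          g1d[OF B] g1d[OF BA] by (simp add: nth_Cons_pos)
      qed
    qed
  qed
  have qm2: "quasiball_map q (r - 1) g2" if r: "r \<noteq> 0"
    unfolding qm_alt
  proof (intro conjI)
    show "inj_on g2 (small_subsets q (r - 1))"
    proof (rule inj_onI)
      fix A A' assume A: "A \<in> small_subsets q (r - 1)" and A': "A' \<in> small_subsets q (r - 1)" and eq: "g2 A = g2 A'"
      have "f (insert 1 (Suc ` A)) = f (insert 1 (Suc ` A'))" using g2d[OF A r] g2d[OF A' r] eq by simp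
      then have "insert 1 (Suc ` A) = insert 1 (Suc ` A')" using inj ss_ins[OF A r] ss_ins[OF A' r] by (meson inj_onD)
      then have "D (insert 1 (Suc ` A)) = D (insert 1 (Suc ` A'))" by simp
      then show "A = A'" using D_ins[OF sucsub[OF A]] D_ins[OF sucsub[OF A']] by simp
    qed
    show "g2 ` small_subsets q (r - 1) \<subseteq> hypercube q"
      using len ss_ins[OF _ r] unfolding g2_def by (auto simp: hc_mem)
    show "\<forall>B\<in>small_subsets q (r - 1). \<forall>p\<in>B. (\<forall>j<p - 1. g2 B ! j = g2 (B \<inter> {..<p}) ! j) \<and> g2 B ! (p - 1) \<noteq> g2 (B \<inter> {..<p}) ! (p - 1)"
    proof (intro ballI)
      fix B p assume B: "B \<in> small_subsets q (r - 1)" and p: "p \<in> B"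
      have p1: "p \<ge> 1" using B p by (auto simp: ss_mem)
      have BA: "B \<inter> {..<p} \<in> small_subsets q (r - 1)" using B card_mono[OF ss_fin[OF B], of "B \<inter> {..<p}"] by (auto simp: ss_mem)
      have cut: "insert 1 (Suc ` B) \<inter> {..<Suc p} = insert 1 (Suc ` (B \<inter> {..<p}))" using p1 by auto
      have c: "(\<forall>j<Suc p - 1. f (insert 1 (Suc ` B)) ! j = f (insert 1 (Suc ` (B \<inter> {..<p}))) ! j) \<and> f (insert 1 (Suc ` B)) ! (Suc p - 1) \<noteq> f (insert 1 (Suc ` (B \<inter> {..<p}))) ! (Suc p - 1)"
        using cond[OF ss_ins[OF B r], of "Suc p"] p cut by auto
      show "(\<forall>j<p - 1. g2 B ! j = g2 (B \<inter> {..<p}) ! j) \<and> g2 B ! (p - 1) \<noteq> g2 (B \<inter> {..<p}) ! (p - 1)"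
      proof (intro conjI allI impI)
        fix j assume "j < p - 1"
        then show "g2 B ! j = g2 (B \<inter> {..<p}) ! j" using c[THEN conjunct1, rule_format, of "Suc j"]
          g2d[OF B r] g2d[OF BA r] by simp
      next
        show "g2 B ! (p - 1) \<noteq> g2 (B \<inter> {..<p}) ! (p - 1)" using c[THEN conjunct2] p1
          g2d[OF B r] g2d[OF BA r] by (simp add: nth_Cons_pos)
      qed
    qed
  qed
  define S2 where "S2 = (if r = 0 then {} else g2 ` small_subsets q (r - 1))"
  have Seq: "S = Cons b ` (g1 ` small_subsets q r) \<union> Cons (\<not> b) ` S2"
  proof
    show "S \<subseteq> Cons b ` (g1 ` small_subsets q r) \<union> Cons (\<not> b) ` S2"
    proof
      fix w assume "w \<in> S"
      then obtain A where A: "A \<in> small_subsets (Suc q) r" and w: "w = f A" using S by blast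
      have As: "A \<subseteq> {1..Suc q}" using A by (simp add: ss_mem)
      show "w \<in> Cons b ` (g1 ` small_subsets q r) \<union> Cons (\<not> b) ` S2"
      proof (cases "1 \<in> A")
        case False
        have "A = Suc ` D A" using D_recon[OF As] False by simp
        then have "w = b # g1 (D A)" using w g1d[OF ss_D1[OF A False]] by simp
        then show ?thesis using ss_D1[OF A False] by blast
      next
        case True
        have r: "r \<noteq> 0" and DA: "D A \<in> small_subsets q (r - 1)" using ss_D2[OF A True] by auto
        have "A = insert 1 (Suc ` D A)" using D_recon[OF As] True by simp
        then have "w = (\<not> b) # g2 (D A)" using w g2d[OF DA r] by simp
        then show ?thesis using DA r unfolding S2_def by auto
      qed
    qed
    show "Cons b ` (g1 ` small_subsets q r) \<union> Cons (\<not> b) ` S2 \<subseteq> S"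
    proof
      fix w assume "w \<in> Cons b ` (g1 ` small_subsets q r) \<union> Cons (\<not> b) ` S2"
      then consider A where "A \<in> small_subsets q r" "w = b # g1 A"
        | A where "r \<noteq> 0" "A \<in> small_subsets q (r - 1)" "w = (\<not> b) # g2 A"
        unfolding S2_def by (auto split: if_splits)
      then show "w \<in> S"
      proof cases
        case 1 then show ?thesis using g1d[OF 1(1)] ss_Suc[OF 1(1)] S by (metis image_eqI)
      next
        case 2 then show ?thesis using g2d[OF 2(2,1)] ss_ins[OF 2(2,1)] S by (metis image_eqI)
      qed
    qed
  qed
  have "quasiball q r (g1 ` small_subsets q r)" using qm1 unfolding quasiball_def by blast
  moreover have "if r = 0 then S2 = {} else quasiball q (r - 1) S2"
    using qm2 unfolding S2_def quasiball_def by auto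
  ultimately show ?thesis using Seq by blast
qed

lemma QS_bwd:
  assumes A1: "quasiball q r S1" and A2: "if r = 0 then S2 = {} else quasiball q (r - 1) S2"
  shows "quasiball (Suc q) r (Cons b ` S1 \<union> Cons (\<not> b) ` S2)"
proof -
  obtain g1 where qm1: "quasiball_map q r g1" and S1: "S1 = g1 ` small_subsets q r"
    using A1 unfolding quasiball_def by blast
  obtain g2 where qm2: "r \<noteq> 0 \<Longrightarrow> quasiball_map q (r - 1) g2"
    and S2: "S2 = (if r = 0 then {} else g2 ` small_subsets q (r - 1))"
    using A2 unfolding quasiball_def by (cases "r = 0") auto
  note Q1 = qm1[unfolded qm_alt]
  note Q2 = qm2[unfolded qm_alt]
  define f where "f A = (if 1 \<in> A then (\<not> b) # g2 (D A) else b # g1 (D A))" for A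
  have sub: "A \<subseteq> {1..Suc q}" if "A \<in> small_subsets (Suc q) r" for A using that by (simp add: ss_mem)
  have sucsub: "A \<subseteq> {1..q}" if "A \<in> small_subsets q r'" for A r' using that by (simp add: ss_mem)
  have len1: "length (g1 A) = q" if "A \<in> small_subsets q r" for A using Q1 that by (auto simp: hc_mem)
  have len2: "length (g2 A) = q" if "A \<in> small_subsets q (r - 1)" "r \<noteq> 0" for A using Q2 that by (auto simp: hc_mem)
  have fSuc: "f (Suc ` A) = b # g1 A" if "A \<in> small_subsets q r" for A
    using D_Suc[OF sucsub[OF that]] one_notin[OF sucsub[OF that]] unfolding f_def by simp
  have fIns: "f (insert 1 (Suc ` A)) = (\<not> b) # g2 A" if "A \<in> small_subsets q (r - 1)" for A
    using D_ins[OF sucsub[OF that]] unfolding f_def by simp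
  have qm: "quasiball_map (Suc q) r f"
    unfolding qm_alt
  proof (intro conjI)
    show "inj_on f (small_subsets (Suc q) r)"
    proof (rule inj_onI)
      fix A A' assume A: "A \<in> small_subsets (Suc q) r" and A': "A' \<in> small_subsets (Suc q) r" and eq: "f A = f A'"
      have same: "(1 \<in> A) = (1 \<in> A')" using eq unfolding f_def by (auto split: if_splits)
      have "D A = D A'"
      proof (cases "1 \<in> A")
        case False
        then have "g1 (D A) = g1 (D A')" using eq same unfolding f_def by simp
        then show ?thesis using Q1 ss_D1[OF A False] ss_D1[OF A'] False same by (meson inj_onD)
      next
        case True
        then have r: "r \<noteq> 0" using ss_D2[OF A] by blast
        have "g2 (D A) = g2 (D A')" using eq same True unfolding f_def by simp
        then show ?thesis using Q2[OF r] ss_D2[OF A True] ss_D2[OF A'] True same by (meson inj_onD)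
      qed
      then show "A = A'" using D_recon[OF sub[OF A]] D_recon[OF sub[OF A']] same by metis
    qed
    show "f ` small_subsets (Suc q) r \<subseteq> hypercube (Suc q)"
    proof
      fix w assume "w \<in> f ` small_subsets (Suc q) r"
      then obtain A where A: "A \<in> small_subsets (Suc q) r" and w: "w = f A" by blast
      show "w \<in> hypercube (Suc q)"
      proof (cases "1 \<in> A")
        case True then show ?thesis using w len2 ss_D2[OF A True] unfolding f_def by (simp add: hc_mem)
      next
        case False then show ?thesis using w len1 ss_D1[OF A False] unfolding f_def by (simp add: hc_mem)
      qed
    qed
    show "\<forall>B\<in>small_subsets (Suc q) r. \<forall>p\<in>B. (\<forall>j<p - 1. f B ! j = f (B \<inter> {..<p}) ! j) \<and> f B ! (p - 1) \<noteq> f (B \<inter> {..<p}) ! (p - 1)"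
    proof (intro ballI)
      fix B p assume B: "B \<in> small_subsets (Suc q) r" and p: "p \<in> B"
      have p1: "p \<ge> 1" using B p by (auto simp: ss_mem)
      have BA: "B \<inter> {..<p} \<in> small_subsets (Suc q) r" using B card_mono[OF ss_fin[OF B], of "B \<inter> {..<p}"] by (auto simp: ss_mem)
      show "(\<forall>j<p - 1. f B ! j = f (B \<inter> {..<p}) ! j) \<and> f B ! (p - 1) \<noteq> f (B \<inter> {..<p}) ! (p - 1)"
      proof (cases "p = 1")
        case True
        have e: "B \<inter> {..<p} = {}" using True B by (auto simp: ss_mem)
        have "1 \<in> B" using True p by simp
        then show ?thesis using e True unfolding f_def by simp
      next
        case False
        then have p2: "p \<ge> 2" using p1 by linarith
        have same: "(1 \<in> B \<inter> {..<p}) = (1 \<in> B)" using p2 by auto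
        have pD: "p - 1 \<in> D B" using p p2 unfolding D_def by simp
        have cutD: "D (B \<inter> {..<p}) = D B \<inter> {..<p - 1}" by (rule D_cut)
        show ?thesis
        proof (cases "1 \<in> B")
          case True
          have r: "r \<noteq> 0" and DB: "D B \<in> small_subsets q (r - 1)" using ss_D2[OF B True] by auto
          have c: "(\<forall>j<p - 1 - 1. g2 (D B) ! j = g2 (D B \<inter> {..<p - 1}) ! j) \<and> g2 (D B) ! (p - 1 - 1) \<noteq> g2 (D B \<inter> {..<p - 1}) ! (p - 1 - 1)"
            using Q2[OF r] DB pD by blast
          have fB: "f B = (\<not> b) # g2 (D B)" using True unfolding f_def by simp
          have fA: "f (B \<inter> {..<p}) = (\<not> b) # g2 (D B \<inter> {..<p - 1})" using True same cutD unfolding f_def by simp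
          show ?thesis
          proof (intro conjI allI impI)
            fix j assume j: "j < p - 1"
            show "f B ! j = f (B \<inter> {..<p}) ! j"
            proof (cases j)
              case 0 then show ?thesis using fB fA by simp
            next
              case (Suc j') then show ?thesis using fB fA c j by simp
            qed
          next
            show "f B ! (p - 1) \<noteq> f (B \<inter> {..<p}) ! (p - 1)" using fB fA c p2 by (simp add: nth_Cons_pos)
          qed
        next
          case False
          have DB: "D B \<in> small_subsets q r" using ss_D1[OF B False] by auto
          have c: "(\<forall>j<p - 1 - 1. g1 (D B) ! j = g1 (D B \<inter> {..<p - 1}) ! j) \<and> g1 (D B) ! (p - 1 - 1) \<noteq> g1 (D B \<inter> {..<p - 1}) ! (p - 1 - 1)"
            using Q1 DB pD by blast
          have fB: "f B = b # g1 (D B)" using False unfolding f_def by simp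
          have fA: "f (B \<inter> {..<p}) = b # g1 (D B \<inter> {..<p - 1})" using False same cutD unfolding f_def by simp
          show ?thesis
          proof (intro conjI allI impI)
            fix j assume j: "j < p - 1"
            show "f B ! j = f (B \<inter> {..<p}) ! j"
            proof (cases j)
              case 0 then show ?thesis using fB fA by simp
            next
              case (Suc j') then show ?thesis using fB fA c j by simp
            qed
          next
            show "f B ! (p - 1) \<noteq> f (B \<inter> {..<p}) ! (p - 1)" using fB fA c p2 by (simp add: nth_Cons_pos)
          qed
        qed
      qed
    qed
  qed
  have img: "f ` small_subsets (Suc q) r = Cons b ` S1 \<union> Cons (\<not> b) ` S2"
  proof
    show "f ` small_subsets (Suc q) r \<subseteq> Cons b ` S1 \<union> Cons (\<not> b) ` S2"
    proof
      fix w assume "w \<in> f ` small_subsets (Suc q) r"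
      then obtain A where A: "A \<in> small_subsets (Suc q) r" and w: "w = f A" by blast
      show "w \<in> Cons b ` S1 \<union> Cons (\<not> b) ` S2"
      proof (cases "1 \<in> A")
        case True then show ?thesis using w ss_D2[OF A True] unfolding f_def S2 by auto
      next
        case False then show ?thesis using w ss_D1[OF A False] unfolding f_def S1 by auto
      qed
    qed
    show "Cons b ` S1 \<union> Cons (\<not> b) ` S2 \<subseteq> f ` small_subsets (Suc q) r"
    proof
      fix w assume "w \<in> Cons b ` S1 \<union> Cons (\<not> b) ` S2"
      then consider A where "A \<in> small_subsets q r" "w = b # g1 A"
        | A where "r \<noteq> 0" "A \<in> small_subsets q (r - 1)" "w = (\<not> b) # g2 A"
        unfolding S1 S2 by (auto split: if_splits)
      then show "w \<in> f ` small_subsets (Suc q) r"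
      proof cases
        case 1 then show ?thesis using fSuc[OF 1(1)] ss_Suc[OF 1(1)] by (metis image_eqI)
      next
        case 2 then show ?thesis using fIns[OF 2(2)] ss_ins[OF 2(2,1)] by (metis image_eqI)
      qed
    qed
  qed
  show ?thesis using qm img unfolding quasiball_def by metis
qed

lemma QS: "quasiball (Suc q) r S \<longleftrightarrow> (\<exists>b S1 S2. quasiball q r S1 \<and> (if r = 0 then S2 = {} else quasiball q (r - 1) S2)
           \<and> S = Cons b ` S1 \<union> Cons (\<not> b) ` S2)"
  using QS_fwd QS_bwd by metis

definition fam :: "nat \<Rightarrow> nat list \<Rightarrow> 'e set \<Rightarrow> ('e \<Rightarrow> nat) \<Rightarrow> ('e \<Rightarrow> bool list set) \<Rightarrow> bool" where
  "fam q x E lv S \<longleftrightarrow> finite E \<and> (\<forall>e\<in>E. lv e < length x \<and> quasiball q (length x - 1 - lv e) (S e))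
     \<and> (\<forall>i<length x. card {e\<in>E. lv e = i} = x ! i)"

lemma fam_sum:
  assumes "fam q x E lv S" shows "sum_list x = card E"
proof -
  have fin: "finite E" and lvb: "\<forall>e\<in>E. lv e < length x" and cnt: "\<forall>i<length x. card {e\<in>E. lv e = i} = x ! i"
    using assms unfolding fam_def by auto
  have "sum_list x = (\<Sum>i=0..<length x. x ! i)" by (rule sum_list_sum_nth)
  also have "\<dots> = (\<Sum>i\<in>{0..<length x}. sum (\<lambda>_. 1::nat) {e\<in>E. lv e = i})"
    using cnt by (intro sum.cong) auto
  also have "\<dots> = sum (\<lambda>_. 1::nat) E"
    by (rule sum.group) (use fin lvb in auto)
  also have "\<dots> = card E" by simp
  finally show ?thesis .
qed

lemma fam_step:
  assumes F: "fam (Suc q) x E lv S"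
    and dec: "\<forall>e\<in>E. S e = Cons (bb e) ` S1 e \<union> Cons (\<not> bb e) ` S2 e
        \<and> quasiball q (length x - 1 - lv e) (S1 e)
        \<and> (if length x - 1 - lv e = 0 then S2 e = {} else quasiball q (length x - 1 - lv e - 1) (S2 e))"
    and a: "a = map (\<lambda>i. card {e\<in>E. bb e \<and> lv e = i}) [0..<length x]"
  shows "fam q (if c then yes_state x a else no_state x a)
            {e\<in>E. bb e = c \<or> lv e + 1 < length x}
            (\<lambda>e. if bb e = c then lv e else lv e + 1)
            (\<lambda>e. if bb e = c then S1 e else S2 e)"
    and "\<And>e w. e \<in> E \<Longrightarrow> (c # w \<in> S e) \<longleftrightarrow> ((bb e = c \<or> lv e + 1 < length x) \<and> w \<in> (if bb e = c then S1 e else S2 e))"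
    and "legal_question x a"
proof -
  have fin: "finite E" and lvb: "\<And>e. e\<in>E \<Longrightarrow> lv e < length x" and cnt: "\<And>i. i<length x \<Longrightarrow> card {e\<in>E. lv e = i} = x ! i"
    using F unfolding fam_def by auto
  define cT where "cT i = card {e\<in>E. bb e \<and> lv e = i}" for i
  define cF where "cF i = card {e\<in>E. \<not> bb e \<and> lv e = i}" for i
  have sumTF: "cT i + cF i = x ! i" if "i < length x" for i
  proof -
    have "{e\<in>E. lv e = i} = {e\<in>E. bb e \<and> lv e = i} \<union> {e\<in>E. \<not> bb e \<and> lv e = i}" by auto
    moreover have "card ({e\<in>E. bb e \<and> lv e = i} \<union> {e\<in>E. \<not> bb e \<and> lv e = i}) = cT i + cF i"
      unfolding cT_def cF_def by (rule card_Un_disjoint) (use fin in auto)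
    ultimately show ?thesis using cnt[OF that] by simp
  qed
  have an: "a ! i = cT i" if "i < length x" for i using that unfolding a cT_def by simp
  have la: "length a = length x" unfolding a by simp
  show "legal_question x a" unfolding legal_question_def using la an sumTF by (metis le_add1)
  show mem: "(c # w \<in> S e) \<longleftrightarrow> ((bb e = c \<or> lv e + 1 < length x) \<and> w \<in> (if bb e = c then S1 e else S2 e))"
    if e: "e \<in> E" for e w
  proof -
    have d: "S e = Cons (bb e) ` S1 e \<union> Cons (\<not> bb e) ` S2 e"
      and s2: "length x - 1 - lv e = 0 \<Longrightarrow> S2 e = {}" using dec e by auto
    show ?thesis
    proof (cases "bb e = c")
      case True then show ?thesis using d by auto
    next
      case False
      have "w \<in> S2 e \<Longrightarrow> lv e + 1 < length x" using s2 lvb[OF e] by (cases "length x - 1 - lv e = 0") auto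
      then show ?thesis using d False by auto
    qed
  qed
  define Ec where "Ec = {e\<in>E. bb e = c \<or> lv e + 1 < length x}"
  define lvc where "lvc e = (if bb e = c then lv e else lv e + 1)" for e
  define Sc where "Sc e = (if bb e = c then S1 e else S2 e)" for e
  define y where "y = (if c then yes_state x a else no_state x a)"
  have ly: "length y = length x" unfolding y_def yes_state_def no_state_def by simp
  have finc: "finite Ec" using fin unfolding Ec_def by simp
  have qb: "lvc e < length y \<and> quasiball q (length y - 1 - lvc e) (Sc e)" if e: "e \<in> Ec" for e
  proof (cases "bb e = c")
    case True then show ?thesis using dec e lvb ly unfolding Ec_def lvc_def Sc_def by auto
  next
    case False
    then have lt: "lv e + 1 < length x" using e unfolding Ec_def by auto
    then have "length x - 1 - lv e \<noteq> 0" by auto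
    then have "quasiball q (length x - 1 - lv e - 1) (S2 e)" using dec e unfolding Ec_def by auto
    moreover have "length x - 1 - lv e - 1 = length y - 1 - (lv e + 1)" using ly by simp
    ultimately show ?thesis using False lt ly unfolding lvc_def Sc_def by auto
  qed
  have ycnt: "card {e\<in>Ec. lvc e = i} = y ! i" if i: "i < length y" for i
  proof -
    have ix: "i < length x" using i ly by simp
    have "{e\<in>Ec. lvc e = i} = {e\<in>E. bb e = c \<and> lv e = i} \<union> {e\<in>E. bb e \<noteq> c \<and> lv e + 1 = i}"
      using ix unfolding Ec_def lvc_def by auto
    moreover have "card ({e\<in>E. bb e = c \<and> lv e = i} \<union> {e\<in>E. bb e \<noteq> c \<and> lv e + 1 = i})
        = card {e\<in>E. bb e = c \<and> lv e = i} + card {e\<in>E. bb e \<noteq> c \<and> lv e + 1 = i}"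
      by (rule card_Un_disjoint) (use fin in auto)
    moreover have "card {e\<in>E. bb e = c \<and> lv e = i} = (if c then cT i else cF i)"
      unfolding cT_def cF_def by (cases c) auto
    moreover have "card {e\<in>E. bb e \<noteq> c \<and> lv e + 1 = i} = (if i = 0 then 0 else if c then cF (i - 1) else cT (i - 1))"
    proof (cases "i = 0")
      case True then show ?thesis by simp
    next
      case False
      then have "{e\<in>E. bb e \<noteq> c \<and> lv e + 1 = i} = {e\<in>E. bb e \<noteq> c \<and> lv e = i - 1}" by auto
      then show ?thesis using False unfolding cT_def cF_def by (cases c) auto
    qed
    moreover have "y ! i = (if c then (if i = 0 then cT 0 else cT i + (x ! (i - 1) - cT (i - 1)))
                     else (if i = 0 then x ! 0 - cT 0 else (x ! i - cT i) + cT (i - 1)))"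
      unfolding y_def yes_state_def no_state_def using ix an by (cases c) auto
    moreover have "x ! i - cT i = cF i" using sumTF[OF ix] by simp
    moreover have "i \<noteq> 0 \<Longrightarrow> x ! (i - 1) - cT (i - 1) = cF (i - 1)" proof -
      assume "i \<noteq> 0"
      have "i - 1 < length x" using ix by simp
      from sumTF[OF this] show ?thesis by simp
    qed
    ultimately show ?thesis by (cases c; cases "i = 0") auto
  qed
  show "fam q (if c then yes_state x a else no_state x a)
            {e\<in>E. bb e = c \<or> lv e + 1 < length x}
            (\<lambda>e. if bb e = c then lv e else lv e + 1)
            (\<lambda>e. if bb e = c then S1 e else S2 e)"
    using finc qb ycnt unfolding fam_def y_def[symmetric] Ec_def[symmetric]
      lvc_def[abs_def, symmetric] Sc_def[abs_def, symmetric] by blast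
qed

lemma fam_decomp:
  assumes F: "fam (Suc q) x E lv S"
  shows "\<exists>bb S1 S2. \<forall>e\<in>E. S e = Cons (bb e) ` S1 e \<union> Cons (\<not> bb e) ` S2 e
        \<and> quasiball q (length x - 1 - lv e) (S1 e)
        \<and> (if length x - 1 - lv e = 0 then S2 e = {} else quasiball q (length x - 1 - lv e - 1) (S2 e))"
proof -
  have "\<forall>e\<in>E. \<exists>t. S e = Cons (fst t) ` fst (snd t) \<union> Cons (\<not> fst t) ` snd (snd t)
        \<and> quasiball q (length x - 1 - lv e) (fst (snd t))
        \<and> (if length x - 1 - lv e = 0 then snd (snd t) = {} else quasiball q (length x - 1 - lv e - 1) (snd (snd t)))"
  proof
    fix e assume "e \<in> E"
    then have "quasiball (Suc q) (length x - 1 - lv e) (S e)" using F unfolding fam_def by blast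
    then obtain b S1 S2 where "quasiball q (length x - 1 - lv e) S1"
      "if length x - 1 - lv e = 0 then S2 = {} else quasiball q (length x - 1 - lv e - 1) S2"
      "S e = Cons b ` S1 \<union> Cons (\<not> b) ` S2" unfolding QS by blast
    note o = this
    show "\<exists>t. S e = Cons (fst t) ` fst (snd t) \<union> Cons (\<not> fst t) ` snd (snd t)
        \<and> quasiball q (length x - 1 - lv e) (fst (snd t))
        \<and> (if length x - 1 - lv e = 0 then snd (snd t) = {} else quasiball q (length x - 1 - lv e - 1) (snd (snd t)))"
      apply (rule exI[of _ "(b, S1, S2)"])
      unfolding fst_conv snd_conv using o by blast
  qed
  from bchoice[OF this] obtain t where T: "\<forall>e\<in>E. S e = Cons (fst (t e)) ` fst (snd (t e)) \<union> Cons (\<not> fst (t e)) ` snd (snd (t e))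
        \<and> quasiball q (length x - 1 - lv e) (fst (snd (t e)))
        \<and> (if length x - 1 - lv e = 0 then snd (snd (t e)) = {} else quasiball q (length x - 1 - lv e - 1) (snd (snd (t e))))"
    by blast
  show ?thesis
    by (rule exI[of _ "\<lambda>e. fst (t e)"], rule exI[of _ "\<lambda>e. fst (snd (t e))"], rule exI[of _ "\<lambda>e. snd (snd (t e))"])
      (use T in blast)
qed

lemma fam_cover_win:
  "fam q x E lv S \<Longrightarrow> (\<Union>e\<in>E. S e) = hypercube q \<Longrightarrow> paul_wins (\<lambda>y. sum_list y \<ge> 1) q x"
proof (induction q arbitrary: x E lv S)
  case 0
  have "[] \<in> hypercube 0" by (simp add: hc_mem)
  then have "E \<noteq> {}" using 0(2) by auto
  moreover have "finite E" using 0(1) unfolding fam_def by blast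
  ultimately have "card E \<ge> 1" by (simp add: Suc_leI card_gt_0_iff)
  then show ?case using fam_sum[OF 0(1)] by simp
next
  case (Suc q)
  obtain bb S1 S2 where dec: "\<forall>e\<in>E. S e = Cons (bb e) ` S1 e \<union> Cons (\<not> bb e) ` S2 e
        \<and> quasiball q (length x - 1 - lv e) (S1 e)
        \<and> (if length x - 1 - lv e = 0 then S2 e = {} else quasiball q (length x - 1 - lv e - 1) (S2 e))"
    using fam_decomp[OF Suc(2)] by blast
  define a where "a = map (\<lambda>i. card {e\<in>E. bb e \<and> lv e = i}) [0..<length x]"
  note st = fam_step[OF Suc(2) dec a_def]
  have sub: "S e \<subseteq> hypercube (Suc q)" if "e \<in> E" for e
    using Suc(2) that quasiball_sub unfolding fam_def by blast
  have W: "paul_wins (\<lambda>y. sum_list y \<ge> 1) q (if c then yes_state x a else no_state x a)" for c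
  proof (rule Suc.IH[OF st(1)[of c]])
    show "(\<Union>e\<in>{e \<in> E. bb e = c \<or> lv e + 1 < length x}. if bb e = c then S1 e else S2 e) = hypercube q"
    proof
      show "(\<Union>e\<in>{e \<in> E. bb e = c \<or> lv e + 1 < length x}. if bb e = c then S1 e else S2 e) \<subseteq> hypercube q"
      proof
        fix w assume "w \<in> (\<Union>e\<in>{e \<in> E. bb e = c \<or> lv e + 1 < length x}. if bb e = c then S1 e else S2 e)"
        then obtain e where e: "e \<in> E" "(bb e = c \<or> lv e + 1 < length x) \<and> w \<in> (if bb e = c then S1 e else S2 e)" by blast
        then have "c # w \<in> S e" using st(2)[OF e(1), where w=w and c=c] by blast
        then show "w \<in> hypercube q" using sub[OF e(1)] by (auto simp: hc_mem)
      qed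
      show "hypercube q \<subseteq> (\<Union>e\<in>{e \<in> E. bb e = c \<or> lv e + 1 < length x}. if bb e = c then S1 e else S2 e)"
      proof
        fix w assume "w \<in> hypercube q"
        then have "c # w \<in> hypercube (Suc q)" by (simp add: hc_mem)
        then obtain e where e: "e \<in> E" "c # w \<in> S e" using Suc(3) by blast
        then show "w \<in> (\<Union>e\<in>{e \<in> E. bb e = c \<or> lv e + 1 < length x}. if bb e = c then S1 e else S2 e)"
          using st(2)[OF e(1), where w=w and c=c] by blast
      qed
    qed
  qed
  show ?case using st(3) W[of True] W[of False] by auto
qed

lemma fam_pack_win:
  "fam q x E lv S \<Longrightarrow> (\<forall>e\<in>E. \<forall>e'\<in>E. e \<noteq> e' \<longrightarrow> S e \<inter> S e' = {}) \<Longrightarrow> paul_wins (\<lambda>y. sum_list y \<le> 1) q x"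
proof (induction q arbitrary: x E lv S)
  case 0
  have fin: "finite E" using 0(1) unfolding fam_def by blast
  have "S e = {[]}" if "e \<in> E" for e using 0(1) that Q0 unfolding fam_def by blast
  note Se = this
  have "\<forall>e\<in>E. \<forall>e'\<in>E. e = e'"
  proof (intro ballI)
    fix e e' assume e: "e \<in> E" and e': "e' \<in> E"
    show "e = e'"
    proof (rule ccontr)
      assume "e \<noteq> e'"
      then have "S e \<inter> S e' = {}" using 0(2) e e' by blast
      then show False using Se[OF e] Se[OF e'] by simp
    qed
  qed
  then have "card E \<le> 1" using fin by (simp add: card_le_Suc0_iff_eq)
  then show ?case using fam_sum[OF 0(1)] by simp
next
  case (Suc q)
  obtain bb S1 S2 where dec: "\<forall>e\<in>E. S e = Cons (bb e) ` S1 e \<union> Cons (\<not> bb e) ` S2 e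
        \<and> quasiball q (length x - 1 - lv e) (S1 e)
        \<and> (if length x - 1 - lv e = 0 then S2 e = {} else quasiball q (length x - 1 - lv e - 1) (S2 e))"
    using fam_decomp[OF Suc(2)] by blast
  define a where "a = map (\<lambda>i. card {e\<in>E. bb e \<and> lv e = i}) [0..<length x]"
  note st = fam_step[OF Suc(2) dec a_def]
  have W: "paul_wins (\<lambda>y. sum_list y \<le> 1) q (if c then yes_state x a else no_state x a)" for c
  proof (rule Suc.IH[OF st(1)[of c]])
    show "\<forall>e\<in>{e \<in> E. bb e = c \<or> lv e + 1 < length x}. \<forall>e'\<in>{e \<in> E. bb e = c \<or> lv e + 1 < length x}.
        e \<noteq> e' \<longrightarrow> (if bb e = c then S1 e else S2 e) \<inter> (if bb e' = c then S1 e' else S2 e') = {}"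
    proof (intro ballI impI)
      fix e e' assume e: "e \<in> {e \<in> E. bb e = c \<or> lv e + 1 < length x}" and e': "e' \<in> {e \<in> E. bb e = c \<or> lv e + 1 < length x}"
        and ne: "e \<noteq> e'"
      show "(if bb e = c then S1 e else S2 e) \<inter> (if bb e' = c then S1 e' else S2 e') = {}"
      proof (rule ccontr)
        assume "(if bb e = c then S1 e else S2 e) \<inter> (if bb e' = c then S1 e' else S2 e') \<noteq> {}"
        then obtain w where "w \<in> (if bb e = c then S1 e else S2 e)" "w \<in> (if bb e' = c then S1 e' else S2 e')" by blast
        then have "c # w \<in> S e" "c # w \<in> S e'" using st(2)[where e=e and w=w and c=c] st(2)[where e=e' and w=w and c=c] e e' by auto
        then show False using Suc(3) e e' ne by blast
      qed
    qed
  qed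
  show ?case using st(3) W[of True] W[of False] by auto
qed

lemma yes_nth: "i < length x \<Longrightarrow> yes_state x a ! i = (if i = 0 then a ! 0 else a ! i + (x ! (i - 1) - a ! (i - 1)))"
  by (simp add: yes_state_def)
lemma no_nth: "i < length x \<Longrightarrow> no_state x a ! i = (if i = 0 then x ! 0 - a ! 0 else (x ! i - a ! i) + a ! (i - 1))"
  by (simp add: no_state_def)
lemma yes_len: "length (yes_state x a) = length x" by (simp add: yes_state_def)
lemma no_len: "length (no_state x a) = length x" by (simp add: no_state_def)

definition phY :: "nat list \<Rightarrow> nat \<Rightarrow> nat \<Rightarrow> nat \<times> nat" where
  "phY a i j = (if j < a ! i then (i, j) else (i + 1, a ! (i + 1) + (j - a ! i)))"
definition phN :: "nat list \<Rightarrow> nat list \<Rightarrow> nat \<Rightarrow> nat \<Rightarrow> nat \<times> nat" where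
  "phN x a i j = (if j < a ! i then (i + 1, x ! (i + 1) - a ! (i + 1) + j) else (i, j - a ! i))"

context
  fixes x a :: "nat list"
  assumes lq: "legal_question x a"
begin

lemma lq_le: "i < length x \<Longrightarrow> a ! i \<le> x ! i" using lq unfolding legal_question_def by blast

lemma phY_valid: "i < length x \<Longrightarrow> j < x ! i \<Longrightarrow> fst (phY a i j) < length x \<Longrightarrow> snd (phY a i j) < yes_state x a ! fst (phY a i j)"
  using lq_le[of i] by (auto simp: phY_def yes_nth)

lemma phN_valid: "i < length x \<Longrightarrow> j < x ! i \<Longrightarrow> fst (phN x a i j) < length x \<Longrightarrow> snd (phN x a i j) < no_state x a ! fst (phN x a i j)"
  using lq_le[of i] by (auto simp: phN_def no_nth)

lemma phY_inj: "i < length x \<Longrightarrow> j < x ! i \<Longrightarrow> i' < length x \<Longrightarrow> j' < x ! i' \<Longrightarrow> phY a i j = phY a i' j' \<Longrightarrow> (i, j) = (i', j')"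
  by (auto simp: phY_def split: if_splits)

lemma phN_inj: "i < length x \<Longrightarrow> j < x ! i \<Longrightarrow> i' < length x \<Longrightarrow> j' < x ! i' \<Longrightarrow> phN x a i j = phN x a i' j' \<Longrightarrow> (i, j) = (i', j')"
  using lq_le[of i] lq_le[of i'] by (auto simp: phN_def split: if_splits)

lemma phY_surj: "i' < length x \<Longrightarrow> j' < yes_state x a ! i' \<Longrightarrow> \<exists>i j. i < length x \<and> j < x ! i \<and> phY a i j = (i', j')"
proof -
  assume i': "i' < length x" and j': "j' < yes_state x a ! i'"
  show ?thesis
  proof (cases "i' = 0 \<or> j' < a ! i'")
    case True
    then have "j' < a ! i'" using j' i' by (auto simp: yes_nth)
    moreover have "j' < x ! i'" using calculation lq_le[OF i'] by linarith
    ultimately have "phY a i' j' = (i', j')" "j' < x ! i'" by (auto simp: phY_def)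
    then show ?thesis using i' by blast
  next
    case False
    then have lt: "j' - a ! i' < x ! (i' - 1) - a ! (i' - 1)" using j' i' by (auto simp: yes_nth)
    have i1: "i' - 1 < length x" using i' by simp
    define j where "j = a ! (i' - 1) + (j' - a ! i')"
    have ii: "i' - 1 + 1 = i'" using False by simp
    have "\<not> j < a ! (i' - 1)" unfolding j_def by simp
    then have "phY a (i' - 1) j = (i' - 1 + 1, a ! (i' - 1 + 1) + (j - a ! (i' - 1)))" unfolding phY_def by simp
    also have "\<dots> = (i', j')" unfolding ii j_def using False by simp
    finally have "phY a (i' - 1) j = (i', j')" .
    moreover have "j < x ! (i' - 1)" unfolding j_def using lt lq_le[OF i1] by linarith
    ultimately show ?thesis using i1 by blast
  qed
qed

lemma phN_surj: "i' < length x \<Longrightarrow> j' < no_state x a ! i' \<Longrightarrow> \<exists>i j. i < length x \<and> j < x ! i \<and> phN x a i j = (i', j')"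
proof -
  assume i': "i' < length x" and j': "j' < no_state x a ! i'"
  show ?thesis
  proof (cases "j' < x ! i' - a ! i'")
    case True
    then have "phN x a i' (a ! i' + j') = (i', j')" "a ! i' + j' < x ! i'" by (auto simp: phN_def)
    then show ?thesis using i' by blast
  next
    case False
    then have i0: "i' \<noteq> 0" using j' i' by (auto simp: no_nth split: if_splits)
    then have lt: "j' - (x ! i' - a ! i') < a ! (i' - 1)" using j' i' False by (auto simp: no_nth)
    have i1: "i' - 1 < length x" using i' by simp
    define j where "j = j' - (x ! i' - a ! i')"
    have ii: "i' - 1 + 1 = i'" using i0 by simp
    have "j < a ! (i' - 1)" unfolding j_def using lt by simp
    then have "phN x a (i' - 1) j = (i' - 1 + 1, x ! (i' - 1 + 1) - a ! (i' - 1 + 1) + j)" unfolding phN_def by simp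
    also have "\<dots> = (i', j')" unfolding ii j_def using False by simp
    finally have "phN x a (i' - 1) j = (i', j')" .
    moreover have "j < x ! (i' - 1)" using \<open>j < a ! (i' - 1)\<close> lq_le[OF i1] by linarith
    ultimately show ?thesis using i1 by blast
  qed
qed

end

definition GG :: "nat \<Rightarrow> (nat \<Rightarrow> nat \<Rightarrow> bool list set) \<Rightarrow> nat \<times> nat \<Rightarrow> bool list set" where
  "GG n BB p = (if fst p < n then BB (fst p) (snd p) else {})"

definition BB :: "nat list \<Rightarrow> nat list \<Rightarrow> (nat \<Rightarrow> nat \<Rightarrow> bool list set) \<Rightarrow> (nat \<Rightarrow> nat \<Rightarrow> bool list set) \<Rightarrow> nat \<Rightarrow> nat \<Rightarrow> bool list set" where
  "BB x a BY BN i j = Cons True ` GG (length x) BY (phY a i j) \<union> Cons False ` GG (length x) BN (phN x a i j)"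

lemma build_qb:
  assumes lq: "legal_question x a"
    and QY: "\<forall>i<length x. \<forall>j<yes_state x a ! i. quasiball q (length x - 1 - i) (BY i j)"
    and QN: "\<forall>i<length x. \<forall>j<no_state x a ! i. quasiball q (length x - 1 - i) (BN i j)"
    and i: "i < length x" and j: "j < x ! i"
  shows "quasiball (Suc q) (length x - 1 - i) (BB x a BY BN i j)"
proof (cases "j < a ! i")
  case True
  have pY: "phY a i j = (i, j)" using True by (simp add: phY_def)
  have pN: "phN x a i j = (i + 1, x ! (i + 1) - a ! (i + 1) + j)" using True by (simp add: phN_def)
  have S1: "quasiball q (length x - 1 - i) (GG (length x) BY (phY a i j))"
    using QY i phY_valid[OF lq i j] pY unfolding GG_def by simp
  have S2: "if length x - 1 - i = 0 then GG (length x) BN (phN x a i j) = {}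
            else quasiball q (length x - 1 - i - 1) (GG (length x) BN (phN x a i j))"
  proof (cases "i + 1 < length x")
    case True
    have "snd (phN x a i j) < no_state x a ! fst (phN x a i j)" using phN_valid[OF lq i j] True pN by simp
    then have "quasiball q (length x - 1 - (i + 1)) (BN (i + 1) (x ! (i + 1) - a ! (i + 1) + j))"
      using QN True pN by simp
    then show ?thesis using True pN unfolding GG_def by (simp add: diff_diff_add)
  next
    case False then show ?thesis using pN unfolding GG_def by simp
  qed
  have "quasiball (Suc q) (length x - 1 - i) (Cons True ` GG (length x) BY (phY a i j) \<union> Cons (\<not> True) ` GG (length x) BN (phN x a i j))"
    by (rule QS_bwd[OF S1 S2])
  then show ?thesis unfolding BB_def by simp
next
  case False
  have pN: "phN x a i j = (i, j - a ! i)" using False by (simp add: phN_def)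
  have pY: "phY a i j = (i + 1, a ! (i + 1) + (j - a ! i))" using False by (simp add: phY_def)
  have S1: "quasiball q (length x - 1 - i) (GG (length x) BN (phN x a i j))"
    using QN i phN_valid[OF lq i j] pN unfolding GG_def by simp
  have S2: "if length x - 1 - i = 0 then GG (length x) BY (phY a i j) = {}
            else quasiball q (length x - 1 - i - 1) (GG (length x) BY (phY a i j))"
  proof (cases "i + 1 < length x")
    case True
    have "snd (phY a i j) < yes_state x a ! fst (phY a i j)" using phY_valid[OF lq i j] True pY by simp
    then have "quasiball q (length x - 1 - (i + 1)) (BY (i + 1) (a ! (i + 1) + (j - a ! i)))"
      using QY True pY by simp
    then show ?thesis using True pY unfolding GG_def by (simp add: diff_diff_add)
  next
    case False then show ?thesis using pY unfolding GG_def by simp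
  qed
  have "quasiball (Suc q) (length x - 1 - i) (Cons False ` GG (length x) BN (phN x a i j) \<union> Cons (\<not> False) ` GG (length x) BY (phY a i j))"
    by (rule QS_bwd[OF S1 S2])
  then show ?thesis unfolding BB_def by (simp add: Un_commute)
qed

lemma two_le_sum:
  fixes x :: "nat list"
  assumes "i < length x" "j < x ! i" "i' < length x" "j' < x ! i'" "(i, j) \<noteq> (i', j')"
  shows "2 \<le> sum_list x"
proof (cases "i = i'")
  case True
  then have "x ! i \<ge> 2" using assms by auto
  then show ?thesis using elem_le_sum_list[OF assms(1)] by linarith
next
  case False
  have "x ! i + x ! i' = (\<Sum>k\<in>{i, i'}. x ! k)" using False by simp
  also have "\<dots> \<le> (\<Sum>k\<in>{0..<length x}. x ! k)" by (rule sum_mono2) (use assms in auto)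
  also have "\<dots> = sum_list x" by (simp add: sum_list_sum_nth)
  finally show ?thesis using assms by linarith
qed

lemma sum_pos_ex: "1 \<le> sum_list (x::nat list) \<Longrightarrow> \<exists>i<length x. 0 < x ! i"
proof (rule ccontr)
  assume "1 \<le> sum_list x" "\<not> (\<exists>i<length x. 0 < x ! i)"
  then have "(\<Sum>k\<in>{0..<length x}. x ! k) = 0" by (intro sum.neutral) auto
  then show False using \<open>1 \<le> sum_list x\<close> by (simp add: sum_list_sum_nth)
qed

lemma hc_Suc: "w \<in> hypercube (Suc q) \<Longrightarrow> \<exists>c w'. w = c # w' \<and> w' \<in> hypercube q"
  by (cases w) (auto simp: hc_mem)

lemma win_cover: "paul_wins (\<lambda>y. sum_list y \<ge> 1) q x \<Longrightarrow> \<exists>B. x_covering q x B"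
proof (induction q arbitrary: x)
  case 0
  then have s: "1 \<le> sum_list x" by simp
  obtain i where i: "i < length x" "0 < x ! i" using sum_pos_ex[OF s] by blast
  have "x_covering 0 x (\<lambda>i j. {[]})"
    unfolding x_covering_def using i by (auto simp: Q0 hc_mem hypercube_def)
  then show ?case by blast
next
  case (Suc q)
  obtain a where lq: "legal_question x a" and wy: "paul_wins (\<lambda>y. sum_list y \<ge> 1) q (yes_state x a)"
    and wn: "paul_wins (\<lambda>y. sum_list y \<ge> 1) q (no_state x a)" using Suc.prems by auto
  obtain BY where CY: "x_covering q (yes_state x a) BY" using Suc.IH[OF wy] by blast
  obtain BN where CN: "x_covering q (no_state x a) BN" using Suc.IH[OF wn] by blast
  have QY: "\<forall>i<length x. \<forall>j<yes_state x a ! i. quasiball q (length x - 1 - i) (BY i j)"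
    using CY unfolding x_covering_def yes_len by blast
  have QN: "\<forall>i<length x. \<forall>j<no_state x a ! i. quasiball q (length x - 1 - i) (BN i j)"
    using CN unfolding x_covering_def no_len by blast
  have UY: "(\<Union>i<length x. \<Union>j<yes_state x a ! i. BY i j) = hypercube q" using CY unfolding x_covering_def yes_len by blast
  have UN: "(\<Union>i<length x. \<Union>j<no_state x a ! i. BN i j) = hypercube q" using CN unfolding x_covering_def no_len by blast
  define B where "B = BB x a BY BN"
  have QB: "\<forall>i<length x. \<forall>j<x ! i. quasiball (Suc q) (length x - 1 - i) (B i j)"
    unfolding B_def using build_qb[OF lq QY QN] by blast
  have "(\<Union>i<length x. \<Union>j<x ! i. B i j) = hypercube (Suc q)"
  proof
    show "(\<Union>i<length x. \<Union>j<x ! i. B i j) \<subseteq> hypercube (Suc q)" using QB quasiball_sub by blast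
    show "hypercube (Suc q) \<subseteq> (\<Union>i<length x. \<Union>j<x ! i. B i j)"
    proof
      fix w assume "w \<in> hypercube (Suc q)"
      then obtain c w' where w: "w = c # w'" and w': "w' \<in> hypercube q" using hc_Suc by blast
      show "w \<in> (\<Union>i<length x. \<Union>j<x ! i. B i j)"
      proof (cases c)
        case True
        obtain i' j' where ij': "i' < length x" "j' < yes_state x a ! i'" "w' \<in> BY i' j'" using w' UY by blast
        obtain i j where ij: "i < length x" "j < x ! i" "phY a i j = (i', j')" using phY_surj[OF lq ij'(1,2)] by blast
        have "w \<in> B i j" unfolding B_def BB_def GG_def using ij ij' w True by simp
        then show ?thesis using ij by blast
      next
        case False
        obtain i' j' where ij': "i' < length x" "j' < no_state x a ! i'" "w' \<in> BN i' j'" using w' UN by blast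
        obtain i j where ij: "i < length x" "j < x ! i" "phN x a i j = (i', j')" using phN_surj[OF lq ij'(1,2)] by blast
        have "w \<in> B i j" unfolding B_def BB_def GG_def using ij ij' w False by simp
        then show ?thesis using ij by blast
      qed
    qed
  qed
  then have "x_covering (Suc q) x B" unfolding x_covering_def using QB by blast
  then show ?case by blast
qed

lemma win_pack: "paul_wins (\<lambda>y. sum_list y \<le> 1) q x \<Longrightarrow> \<exists>B. x_packing q x B"
proof (induction q arbitrary: x)
  case 0
  then have s: "sum_list x \<le> 1" by simp
  have "x_packing 0 x (\<lambda>i j. {[]})"
    unfolding x_packing_def using two_le_sum s by (fastforce simp: Q0)
  then show ?case by blast
next
  case (Suc q)
  obtain a where lq: "legal_question x a" and wy: "paul_wins (\<lambda>y. sum_list y \<le> 1) q (yes_state x a)"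
    and wn: "paul_wins (\<lambda>y. sum_list y \<le> 1) q (no_state x a)" using Suc.prems by auto
  obtain BY where CY: "x_packing q (yes_state x a) BY" using Suc.IH[OF wy] by blast
  obtain BN where CN: "x_packing q (no_state x a) BN" using Suc.IH[OF wn] by blast
  have QY: "\<forall>i<length x. \<forall>j<yes_state x a ! i. quasiball q (length x - 1 - i) (BY i j)"
    using CY unfolding x_packing_def yes_len by blast
  have QN: "\<forall>i<length x. \<forall>j<no_state x a ! i. quasiball q (length x - 1 - i) (BN i j)"
    using CN unfolding x_packing_def no_len by blast
  have DY: "\<And>i j i' j'. i<length x \<Longrightarrow> j<yes_state x a ! i \<Longrightarrow> i'<length x \<Longrightarrow> j'<yes_state x a ! i' \<Longrightarrow>
        (i, j) \<noteq> (i', j') \<Longrightarrow> BY i j \<inter> BY i' j' = {}"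
    using CY unfolding x_packing_def yes_len by blast
  have DN: "\<And>i j i' j'. i<length x \<Longrightarrow> j<no_state x a ! i \<Longrightarrow> i'<length x \<Longrightarrow> j'<no_state x a ! i' \<Longrightarrow>
        (i, j) \<noteq> (i', j') \<Longrightarrow> BN i j \<inter> BN i' j' = {}"
    using CN unfolding x_packing_def no_len by blast
  define B where "B = BB x a BY BN"
  have QB: "\<forall>i<length x. \<forall>j<x ! i. quasiball (Suc q) (length x - 1 - i) (B i j)"
    unfolding B_def using build_qb[OF lq QY QN] by blast
  have DB: "B i j \<inter> B i' j' = {}" if ij: "i < length x" "j < x ! i" and ij': "i' < length x" "j' < x ! i'"
    and ne: "(i, j) \<noteq> (i', j')" for i j i' j'
  proof (rule ccontr)
    assume "B i j \<inter> B i' j' \<noteq> {}"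
    then obtain w where w1: "w \<in> B i j" and w2: "w \<in> B i' j'" by blast
    show False
    proof (cases "hd w")
      case True
      have w1': "tl w \<in> GG (length x) BY (phY a i j)" using w1 True unfolding B_def BB_def by auto
      have w2': "tl w \<in> GG (length x) BY (phY a i' j')" using w2 True unfolding B_def BB_def by auto
      have f1: "fst (phY a i j) < length x" using w1' unfolding GG_def by (auto split: if_splits)
      have f2: "fst (phY a i' j') < length x" using w2' unfolding GG_def by (auto split: if_splits)
      have v1: "snd (phY a i j) < yes_state x a ! fst (phY a i j)" using phY_valid[OF lq ij f1] .
      have v2: "snd (phY a i' j') < yes_state x a ! fst (phY a i' j')" using phY_valid[OF lq ij' f2] .
      have "phY a i j \<noteq> phY a i' j'" using phY_inj[OF lq ij ij'] ne by blast
      then have "BY (fst (phY a i j)) (snd (phY a i j)) \<inter> BY (fst (phY a i' j')) (snd (phY a i' j')) = {}"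
        using DY[OF f1 v1 f2 v2] by (simp add: prod_eq_iff)
      then show False using w1' w2' f1 f2 unfolding GG_def by auto
    next
      case False
      have w1': "tl w \<in> GG (length x) BN (phN x a i j)" using w1 False unfolding B_def BB_def by auto
      have w2': "tl w \<in> GG (length x) BN (phN x a i' j')" using w2 False unfolding B_def BB_def by auto
      have f1: "fst (phN x a i j) < length x" using w1' unfolding GG_def by (auto split: if_splits)
      have f2: "fst (phN x a i' j') < length x" using w2' unfolding GG_def by (auto split: if_splits)
      have v1: "snd (phN x a i j) < no_state x a ! fst (phN x a i j)" using phN_valid[OF lq ij f1] .
      have v2: "snd (phN x a i' j') < no_state x a ! fst (phN x a i' j')" using phN_valid[OF lq ij' f2] .
      have "phN x a i j \<noteq> phN x a i' j'" using phN_inj[OF lq ij ij'] ne by blast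
      then have "BN (fst (phN x a i j)) (snd (phN x a i j)) \<inter> BN (fst (phN x a i' j')) (snd (phN x a i' j')) = {}"
        using DN[OF f1 v1 f2 v2] by (simp add: prod_eq_iff)
      then show False using w1' w2' f1 f2 unfolding GG_def by auto
    qed
  qed
  have "x_packing (Suc q) x B" unfolding x_packing_def using QB DB by blast
  then show ?case by blast
qed

lemma B_fam:
  assumes Q: "\<forall>i<length x. \<forall>j<x ! i. quasiball q (length x - 1 - i) (B i j)"
  shows "fam q x (Sigma {..<length x} (\<lambda>i. {..<x ! i})) fst (\<lambda>p. B (fst p) (snd p))"
  unfolding fam_def
proof (intro conjI ballI allI impI)
  show "finite (Sigma {..<length x} (\<lambda>i. {..<x ! i}))" by auto
next
  fix e assume "e \<in> Sigma {..<length x} (\<lambda>i. {..<x ! i})"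
  then show "fst e < length x" "quasiball q (length x - 1 - fst e) (B (fst e) (snd e))" using Q by auto
next
  fix i assume i: "i < length x"
  have "{e \<in> Sigma {..<length x} (\<lambda>i. {..<x ! i}). fst e = i} = Pair i ` {..<x ! i}" using i by auto
  moreover have "card (Pair i ` {..<x ! i}) = x ! i" by (subst card_image) (auto intro: inj_onI)
  ultimately show "card {e \<in> Sigma {..<length x} (\<lambda>i. {..<x ! i}). fst e = i} = x ! i" by simp
qed

theorem theorem19:
  fixes q k :: nat and x :: "nat list"
  assumes "length x = k + 1"
  shows "(pathological_win q x \<longleftrightarrow> (\<exists>B. x_covering q x B)) \<and>
         (original_win q x \<longleftrightarrow> (\<exists>B. x_packing q x B))"
proof (intro conjI iffI)
  show "pathological_win q x \<Longrightarrow> \<exists>B. x_covering q x B" unfolding pathological_win_def by (rule win_cover)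
  show "original_win q x \<Longrightarrow> \<exists>B. x_packing q x B" unfolding original_win_def by (rule win_pack)
next
  assume "\<exists>B. x_covering q x B"
  then obtain B where C: "x_covering q x B" by blast
  have F: "fam q x (Sigma {..<length x} (\<lambda>i. {..<x ! i})) fst (\<lambda>p. B (fst p) (snd p))"
    using C unfolding x_covering_def by (intro B_fam) blast
  have "(\<Union>e\<in>Sigma {..<length x} (\<lambda>i. {..<x ! i}). B (fst e) (snd e)) = (\<Union>i<length x. \<Union>j<x ! i. B i j)"
    by (auto; blast)
  then have "(\<Union>e\<in>Sigma {..<length x} (\<lambda>i. {..<x ! i}). B (fst e) (snd e)) = hypercube q"
    using C unfolding x_covering_def by simp
  then show "pathological_win q x" unfolding pathological_win_def using fam_cover_win[OF F] by simp
next
  assume "\<exists>B. x_packing q x B"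
  then obtain B where C: "x_packing q x B" by blast
  have F: "fam q x (Sigma {..<length x} (\<lambda>i. {..<x ! i})) fst (\<lambda>p. B (fst p) (snd p))"
    using C unfolding x_packing_def by (intro B_fam) blast
  have "\<forall>e\<in>Sigma {..<length x} (\<lambda>i. {..<x ! i}). \<forall>e'\<in>Sigma {..<length x} (\<lambda>i. {..<x ! i}).
          e \<noteq> e' \<longrightarrow> B (fst e) (snd e) \<inter> B (fst e') (snd e') = {}"
    using C unfolding x_packing_def by auto
  then show "original_win q x" unfolding original_win_def using fam_pack_win[OF F] by simp
qed

end
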